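(* Let $\kappa\in\mathbb{R}$ and $m>0$, and let $L_{\kappa,m}$ be as defined in the context. Let $0<\rho_1^*<\rho_2^*<\dots<R_\kappa$ be the points in $(0,R_\kappa)$ at which $L_{\kappa,m}$ attains local maxima or minima. Then the sequence $|L_{\kappa,m}(\rho_i^* )|$ is decreasing in $i$. Moreover, the first local maximum $\rho_1^*$ satisfies $\rho_1^*\ge\sin_\kappa^{-1}(m)$.
   Context: Define $\sin_\kappa(\rho)=\sin(\sqrt{\kappa}\rho)/\sqrt{\kappa}$ if $\kappa>0$, $\sin_\kappa(\rho)=\rho$ if $\kappa=0$, $\sin_\kappa(\rho)=\sinh(\sqrt{-\kappa}\rho)/\sqrt{-\kappa}$ if $\kappa<0$; $\cos_\kappa=(\sin_\kappa)'$, $\cot_\kappa=\cos_\kappa/\sin_\kappa$, $\tan_\kappa=1/\cot_\kappa$. Let $R_\kappa=\infty$ if $\kappa\le0$ and $R_\kappa=\pi/(2\sqrt{\kappa})$ if $\kappa>0$; $\sin_\kappa^{-1}$ denotes the inverse of $\sin_\kappa$ on $[0,R_\kappa)$. $L_{\kappa,m}$ is a solution of \[\sin_\kappa^2(\rho)L''(\rho)+\sin_\kappa(\rho)\cos_\kappa(\rho)L'(\rho)+(\sin_\kappa^2(\rho)-m^2)L(\rho)=0\] that is well defined (regular) at $\rho=0$ and positive on some interval $(0,\varepsilon)$ (so $L_{\kappa,m}(0)=0$ for $m>0$). *)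

theory Defs
  imports "HOL-Analysis.Analysis"
begin

definition sin_k :: "real \<Rightarrow> real \<Rightarrow> real" where
  "sin_k \<kappa> \<rho> = (if \<kappa> > 0 then sin (sqrt \<kappa> * \<rho>) / sqrt \<kappa>
                 else if \<kappa> = 0 then \<rho>
                 else sinh (sqrt (-\<kappa>) * \<rho>) / sqrt (-\<kappa>))"

definition cos_k :: "real \<Rightarrow> real \<Rightarrow> real" where
  "cos_k \<kappa> \<rho> = (if \<kappa> > 0 then cos (sqrt \<kappa> * \<rho>)
                 else if \<kappa> = 0 then 1
                 else cosh (sqrt (-\<kappa>) * \<rho>))"

definition R_k :: "real \<Rightarrow> ereal" where
  "R_k \<kappa> = (if \<kappa> \<le> 0 then \<infinity> else ereal (pi / (2 * sqrt \<kappa>)))"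

definition dom_k :: "real \<Rightarrow> real set" where
  "dom_k \<kappa> = {\<rho>. 0 < \<rho> \<and> ereal \<rho> < R_k \<kappa>}"

definition arcsin_k :: "real \<Rightarrow> real \<Rightarrow> real" where
  "arcsin_k \<kappa> = inv_into {\<rho>. 0 \<le> \<rho> \<and> ereal \<rho> < R_k \<kappa>} (sin_k \<kappa>)"

definition local_extremum_at :: "(real \<Rightarrow> real) \<Rightarrow> real \<Rightarrow> bool" where
  "local_extremum_at f x \<longleftrightarrow>
     (\<exists>e>0. \<forall>y. \<bar>y - x\<bar> < e \<longrightarrow> f y \<le> f x) \<or>
     (\<exists>e>0. \<forall>y. \<bar>y - x\<bar> < e \<longrightarrow> f x \<le> f y)"

end

theory Submission
  imports Defs
begin


lemma dom_iff: "x \<in> dom_k k \<longleftrightarrow> 0 < x \<and> (k > 0 \<longrightarrow> x < pi/(2 * sqrt k))"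
  by (auto simp: dom_k_def R_k_def)

lemma cdom_iff: "{\<rho>. 0 \<le> \<rho> \<and> ereal \<rho> < R_k k} = {x. 0 \<le> x \<and> (k > 0 \<longrightarrow> x < pi/(2 * sqrt k))}"
  by (auto simp: R_k_def)

lemma sk_deriv: "(sin_k k has_real_derivative cos_k k x) (at x)"
proof -
  consider "k>0" | "k=0" | "k<0" by linarith
  then show ?thesis
  proof cases
    case 1
    have e: "sin_k k = (\<lambda>r. sin (sqrt k * r) / sqrt k)" using 1 by (auto simp: sin_k_def fun_eq_iff)
    show ?thesis unfolding e using 1 by (auto intro!: derivative_eq_intros simp: cos_k_def mult.assoc)
  next
    case 2
    have e: "sin_k k = (\<lambda>r. r)" using 2 by (auto simp: sin_k_def fun_eq_iff)
    show ?thesis unfolding e using 2 by (auto intro!: derivative_eq_intros simp: cos_k_def mult.assoc)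
  next
    case 3
    have e: "sin_k k = (\<lambda>r. sinh (sqrt (-k) * r) / sqrt (-k))" using 3 by (auto simp: sin_k_def fun_eq_iff)
    show ?thesis unfolding e using 3 by (auto intro!: derivative_eq_intros simp: cos_k_def mult.assoc)
  qed
qed

lemma sk0: "sin_k k 0 = 0" by (simp add: sin_k_def)

lemma ck_pos: assumes "0 \<le> x" "k > 0 \<longrightarrow> x < pi/(2 * sqrt k)" shows "cos_k k x > 0"
proof -
  consider "k>0" | "k=0" | "k<0" by linarith
  then show ?thesis
  proof cases
    case 1
    have "sqrt k * x < pi/2" using assms 1
      by (simp add: field_simps)
    moreover have "sqrt k * x \<ge> 0" using assms 1 by simp
    ultimately show ?thesis using 1 by (simp add: cos_k_def cos_gt_zero_pi)
  qed (auto simp: cos_k_def mult.assoc)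
qed

lemma sk_mono: assumes "0 \<le> x" "x < y" "k > 0 \<longrightarrow> y < pi/(2 * sqrt k)" shows "sin_k k x < sin_k k y"
proof -
  obtain z where "x < z" "z < y" "sin_k k y - sin_k k x = (y - x) * cos_k k z"
    using MVT2[OF assms(2), of "sin_k k" "cos_k k"] sk_deriv by blast
  moreover have "cos_k k z > 0" using ck_pos[of z k] calculation assms by auto
  ultimately have "(y - x) * cos_k k z > 0" using assms by simp
  then show ?thesis using \<open>sin_k k y - sin_k k x = (y - x) * cos_k k z\<close> by linarith
qed

lemma sk_pos: "x \<in> dom_k k \<Longrightarrow> sin_k k x > 0"
  using sk_mono[of 0 x k] by (auto simp: dom_iff sk0)

lemma sk_lin: assumes "0 < x" "x \<le> b" shows "sin_k k x \<le> (if k < 0 then cosh (sqrt (-k) * b) else 1) * x"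
proof -
  obtain z where z: "0 < z" "z < x" "sin_k k x - sin_k k 0 = (x - 0) * cos_k k z"
    using MVT2[OF assms(1), of "sin_k k" "cos_k k"] sk_deriv by blast
  have "cos_k k z \<le> (if k < 0 then cosh (sqrt (-k) * b) else 1)"
  proof (cases "k < 0")
    case True
    then show ?thesis using z assms by (simp add: cos_k_def cosh_real_nonneg_le_iff)
  qed (auto simp: cos_k_def mult.assoc)
  then have "x * cos_k k z \<le> x * (if k < 0 then cosh (sqrt (-k) * b) else 1)"
    using z by (intro mult_left_mono) auto
  then show ?thesis using z by (simp add: sk0 mult.commute)
qed



locale lset =
  fixes \<kappa> m :: real and L L' L'' :: "real \<Rightarrow> real"
  assumes m_pos: "m > 0"
    and regular: "continuous_on {\<rho>. 0 \<le> \<rho> \<and> ereal \<rho> < R_k \<kappa>} L"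
    and d1: "\<And>\<rho>. \<rho> \<in> dom_k \<kappa> \<Longrightarrow> (L has_real_derivative L' \<rho>) (at \<rho>)"
    and d2: "\<And>\<rho>. \<rho> \<in> dom_k \<kappa> \<Longrightarrow> (L' has_real_derivative L'' \<rho>) (at \<rho>)"
    and ode: "\<And>\<rho>. \<rho> \<in> dom_k \<kappa> \<Longrightarrow>
       (sin_k \<kappa> \<rho>)\<^sup>2 * L'' \<rho> + sin_k \<kappa> \<rho> * cos_k \<kappa> \<rho> * L' \<rho>
         + ((sin_k \<kappa> \<rho>)\<^sup>2 - m\<^sup>2) * L \<rho> = 0"
    and pos: "\<exists>\<epsilon>>0. \<forall>\<rho>. 0 < \<rho> \<and> \<rho> < \<epsilon> \<longrightarrow> L \<rho> > 0"
begin

definition "g x = sin_k \<kappa> x * L' x"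

lemma dom_down: "y \<in> dom_k \<kappa> \<Longrightarrow> 0 < x \<Longrightarrow> x \<le> y \<Longrightarrow> x \<in> dom_k \<kappa>"
  by (auto simp: dom_iff)

lemma s_le: "y \<in> dom_k \<kappa> \<Longrightarrow> 0 < x \<Longrightarrow> x < y \<Longrightarrow> sin_k \<kappa> x < sin_k \<kappa> y"
  by (rule sk_mono) (auto simp: dom_iff)

lemma g_deriv: assumes x: "x \<in> dom_k \<kappa>"
  shows "(g has_real_derivative (- ((sin_k \<kappa> x)\<^sup>2 - m\<^sup>2) * L x / sin_k \<kappa> x)) (at x)"
proof -
  have s: "sin_k \<kappa> x > 0" using sk_pos[OF x] .
  have "(g has_real_derivative (cos_k \<kappa> x * L' x + sin_k \<kappa> x * L'' x)) (at x)"
    unfolding g_def[abs_def] using sk_deriv d1 d2 x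
    by (auto intro!: derivative_eq_intros)
  moreover have "cos_k \<kappa> x * L' x + sin_k \<kappa> x * L'' x = (- ((sin_k \<kappa> x)\<^sup>2 - m\<^sup>2) * L x / sin_k \<kappa> x)"
    using ode[OF x] s by (simp add: field_simps power2_eq_square)
  ultimately show ?thesis by simp
qed

lemma g_cont: "x \<in> dom_k \<kappa> \<Longrightarrow> isCont g x"
  using g_deriv DERIV_isCont by blast

lemma L_cont: "x \<in> dom_k \<kappa> \<Longrightarrow> isCont L x"
  using d1 DERIV_isCont by blast

lemma g_inc: assumes b: "b \<in> dom_k \<kappa>" "sin_k \<kappa> b \<le> m" and Lp: "\<And>t. 0 < t \<Longrightarrow> t < b \<Longrightarrow> L t > 0"
  and xy: "0 < x" "x < y" "y \<le> b"
  shows "g x < g y"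
proof (rule DERIV_pos_imp_increasing_open[OF xy(2)])
  fix t assume t: "x < t" "t < y"
  have td: "t \<in> dom_k \<kappa>" using dom_down[OF b(1), of t] t xy by auto
  have st: "sin_k \<kappa> t > 0" using sk_pos[OF td] .
  have "sin_k \<kappa> t < m" using s_le[OF b(1), of t] t xy b by auto
  hence P: "(sin_k \<kappa> t)\<^sup>2 - m\<^sup>2 < 0" using st
    by (simp add: power2_eq_square) (smt (verit) mult_strict_mono m_pos)
  have "L t > 0" using Lp t xy by auto
  hence "- ((sin_k \<kappa> t)\<^sup>2 - m\<^sup>2) * L t / sin_k \<kappa> t > 0" using P st by simp
  then show "\<exists>y. (g has_real_derivative y) (at t) \<and> 0 < y" using g_deriv[OF td] by blast
next
  show "continuous_on {x..y} g"
    using dom_down[OF b(1)] xy by (intro continuous_at_imp_continuous_on ballI g_cont) auto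
qed

lemma L_cont0: "\<exists>d>0. \<forall>x. 0 \<le> x \<and> (\<kappa> > 0 \<longrightarrow> x < pi/(2 * sqrt \<kappa>)) \<and> x < d \<longrightarrow> \<bar>L x - L 0\<bar> < 1"
proof -
  have "0 \<in> {\<rho>. 0 \<le> \<rho> \<and> ereal \<rho> < R_k \<kappa>}" by (simp add: cdom_iff)
  then have "\<forall>e>0. \<exists>d>0. \<forall>x'\<in>{\<rho>. 0 \<le> \<rho> \<and> ereal \<rho> < R_k \<kappa>}. dist x' 0 < d \<longrightarrow> dist (L x') (L 0) < e"
    using regular unfolding continuous_on_iff by blast
  from this[rule_format, OF zero_less_one] obtain d where "d > 0" "\<forall>x'\<in>{\<rho>. 0 \<le> \<rho> \<and> ereal \<rho> < R_k \<kappa>}. dist x' 0 < d \<longrightarrow> dist (L x') (L 0) < 1"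
    by blast
  then show ?thesis unfolding cdom_iff by (auto simp: dist_real_def)
qed

lemma gpos: assumes b: "b \<in> dom_k \<kappa>" "sin_k \<kappa> b \<le> m" and Lp: "\<And>t. 0 < t \<Longrightarrow> t < b \<Longrightarrow> L t > 0"
  and x0: "0 < x0" "x0 < b" shows "g x0 > 0"
proof (rule ccontr)
  assume "\<not> g x0 > 0" hence g0: "g x0 \<le> 0" by simp
  define x1 where "x1 = x0/2"
  have x1: "0 < x1" "x1 < x0" using x0 by (auto simp: x1_def)
  have gx1: "g x1 < 0" using g_inc[OF b Lp, of x1 x0] x1 x0 g0 by auto
  define c0 where "c0 = - g x1"
  have c0: "c0 > 0" using gx1 by (simp add: c0_def)
  have gle: "g x \<le> -c0" if "0 < x" "x \<le> x1" for x
  proof (cases "x = x1")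
    case False thus ?thesis using g_inc[OF b Lp, of x x1] that x1 x0 by (auto simp: c0_def)
  qed (simp add: c0_def)
  define C where "C = (if \<kappa> < 0 then cosh (sqrt (-\<kappa>) * x1) else 1)"
  have C: "C > 0" by (simp add: C_def)
  have sC: "sin_k \<kappa> x \<le> C * x" if "0 < x" "x \<le> x1" for x
    using sk_lin[OF that] by (simp add: C_def)
  have xd: "x \<in> dom_k \<kappa>" if "0 < x" "x \<le> x1" for x
    using dom_down[OF b(1), of x] that x1 x0 by auto
  have Lder: "L' x \<le> - (c0 / C * (1 / x))" if "0 < x" "x \<le> x1" for x
  proof -
    have sp: "sin_k \<kappa> x > 0" using sk_pos[OF xd[OF that]] .
    have "L' x = g x / sin_k \<kappa> x" using sp by (simp add: g_def)
    also have "\<dots> \<le> - c0 / sin_k \<kappa> x" using divide_right_mono[OF gle[OF that], of "sin_k \<kappa> x"] sp by simp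
    also have "\<dots> \<le> - (c0 / (C * x))"
    proof -
      have "c0 / (C * x) \<le> c0 / sin_k \<kappa> x"
        using sC[OF that] sp c0 C that by (intro divide_left_mono) auto
      thus ?thesis by simp
    qed
    finally show ?thesis by simp
  qed
  define H where "H x = L x + c0 / C * ln x" for x
  have Hmono: "H x1 \<le> H x" if "0 < x" "x \<le> x1" for x
  proof (rule DERIV_nonpos_imp_nonincreasing[OF that(2)])
    fix t assume t: "x \<le> t" "t \<le> x1"
    have "(H has_real_derivative (L' t + c0 / C * (1 / t))) (at t)"
      unfolding H_def[abs_def] using d1[OF xd[of t]] t that C
      by (auto intro!: derivative_eq_intros)
    moreover have "L' t + c0 / C * (1 / t) \<le> 0" using Lder[of t] t that by linarith
    ultimately show "\<exists>y. (H has_real_derivative y) (at t) \<and> y \<le> 0" by blast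
  qed
  obtain d where d: "d > 0" "\<And>x. 0 \<le> x \<Longrightarrow> (\<kappa> > 0 \<longrightarrow> x < pi/(2 * sqrt \<kappa>)) \<Longrightarrow> x < d \<Longrightarrow> \<bar>L x - L 0\<bar> < 1"
    using L_cont0 by blast
  define K where "K = C / c0 * (\<bar>L 0\<bar> + 1 + \<bar>L x1\<bar>) + 1"
  have "C / c0 * (\<bar>L 0\<bar> + 1 + \<bar>L x1\<bar>) \<ge> 0" using C c0 by (intro mult_nonneg_nonneg) auto
  hence K: "K > 0" by (simp add: K_def)
  define mn where "mn = min x1 (d/2)"
  have mn: "0 < mn" "mn \<le> x1" "mn < d" using x1 d by (auto simp: mn_def)
  define x where "x = mn * exp (-K)"
  have e1: "exp (-K) < 1" using K by simp
  have x: "0 < x" "x < mn" using mn e1 by (auto simp: x_def)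
  have "ln x = ln mn - K" using mn by (simp add: x_def ln_mult)
  moreover have "ln mn \<le> ln x1" using mn by simp
  ultimately have lnx: "ln x1 - ln x \<ge> K" by simp
  have "L x1 + c0 / C * ln x1 \<le> L x + c0 / C * ln x" using Hmono[of x] x mn by (simp add: H_def)
  hence "L x \<ge> L x1 + c0 / C * (ln x1 - ln x)" by (simp add: algebra_simps)
  moreover have "c0 / C * (ln x1 - ln x) \<ge> c0 / C * K" using lnx c0 C by (intro mult_left_mono) auto
  moreover have "c0 / C * K = \<bar>L 0\<bar> + 1 + \<bar>L x1\<bar> + c0 / C"
  proof -
    have "c0 / C * K = (c0 / C * (C / c0)) * (\<bar>L 0\<bar> + 1 + \<bar>L x1\<bar>) + c0 / C"
      by (simp add: K_def distrib_left)
    moreover have "c0 / C * (C / c0) = 1" using c0 C by simp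
    ultimately show ?thesis by simp
  qed
  moreover have "c0 / C > 0" using c0 C by simp
  moreover have "L x1 + \<bar>L x1\<bar> \<ge> 0" by simp
  ultimately have "L x > \<bar>L 0\<bar> + 1" by linarith
  moreover have "\<bar>L x - L 0\<bar> < 1"
    using d(2)[of x] xd[of x] x mn by (auto simp: dom_iff)
  ultimately show False by linarith
qed

lemma Lpos: assumes x: "x \<in> dom_k \<kappa>" "sin_k \<kappa> x \<le> m" shows "L x > 0"
proof (rule ccontr)
  assume nx: "\<not> L x > 0"
  obtain \<epsilon> where e: "\<epsilon> > 0" "\<And>\<rho>. 0 < \<rho> \<Longrightarrow> \<rho> < \<epsilon> \<Longrightarrow> L \<rho> > 0" using pos by blast
  define a where "a = min \<epsilon> x / 2"
  have xp: "x > 0" using x by (simp add: dom_iff)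
  have a: "0 < a" "a < \<epsilon>" "a < x" using e xp by (auto simp: a_def)
  have La: "L a > 0" using e a by auto
  define K where "K = {a..x} \<inter> L -` {..0}"
  have cL: "continuous_on {a..x} L"
    using dom_down[OF x(1)] a by (intro continuous_at_imp_continuous_on ballI L_cont) auto
  have "closed K" unfolding K_def by (rule continuous_closed_preimage[OF cL]) auto
  moreover have "x \<in> K" using nx a by (auto simp: K_def)
  moreover have bb: "bdd_below K" by (auto simp: K_def bdd_below_def)
  ultimately have zK: "Inf K \<in> K" by (intro closed_contains_Inf) auto
  define z where "z = Inf K"
  have z: "a \<le> z" "z \<le> x" "L z \<le> 0" using zK by (auto simp: K_def z_def)
  have az: "a < z" using z La by (cases "a = z") auto
  have zd: "z \<in> dom_k \<kappa>" using dom_down[OF x(1)] z a by auto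
  have Lp: "L t > 0" if "0 < t" "t < z" for t
  proof (cases "t < a")
    case True thus ?thesis using e a that by auto
  next
    case False
    show ?thesis
    proof (rule ccontr)
      assume "\<not> L t > 0"
      hence "t \<in> K" using False that z by (auto simp: K_def)
      hence "z \<le> t" unfolding z_def using bb by (rule cInf_lower)
      thus False using that by simp
    qed
  qed
  have sz: "sin_k \<kappa> z \<le> m"
  proof (cases "z = x")
    case False thus ?thesis using s_le[OF x(1), of z] z a x by auto
  qed (use x in simp)
  have "L a < L z"
  proof (rule DERIV_pos_imp_increasing_open[OF az])
    fix t assume t: "a < t" "t < z"
    have td: "t \<in> dom_k \<kappa>" using dom_down[OF zd, of t] t a by auto
    have "g t > 0" using gpos[OF zd sz Lp, of t] t a by auto
    hence "L' t > 0" using sk_pos[OF td] by (simp add: g_def zero_less_mult_iff)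
    thus "\<exists>y. (L has_real_derivative y) (at t) \<and> 0 < y" using d1[OF td] by blast
  next
    show "continuous_on {a..z} L"
      using dom_down[OF zd] a by (intro continuous_at_imp_continuous_on ballI L_cont) auto
  qed
  thus False using La z by simp
qed

lemma L'pos: assumes x: "x \<in> dom_k \<kappa>" "sin_k \<kappa> x \<le> m" shows "L' x > 0"
proof -
  have xp: "x > 0" using x by (simp add: dom_iff)
  have Lp: "L t > 0" if "0 < t" "t < x" for t
    using Lpos[of t] dom_down[OF x(1), of t] s_le[OF x(1), of t] that x by auto
  have "g (x/2) > 0" using gpos[OF x Lp] xp by auto
  moreover have "g (x/2) < g x" using g_inc[OF x Lp, of "x/2" x] xp by auto
  ultimately have "g x > 0" by simp
  thus ?thesis using sk_pos[OF x(1)] by (simp add: g_def zero_less_mult_iff)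
qed

lemma ext_crit: assumes x: "x \<in> dom_k \<kappa>" and e: "local_extremum_at L x" shows "L' x = 0"
  using e unfolding local_extremum_at_def
proof (elim disjE exE conjE)
  fix e assume "e > 0" "\<forall>y. \<bar>y - x\<bar> < e \<longrightarrow> L y \<le> L x"
  thus "L' x = 0" using DERIV_local_max[OF d1[OF x], of e] by (simp add: abs_minus_commute)
next
  fix e assume "e > 0" "\<forall>y. \<bar>y - x\<bar> < e \<longrightarrow> L x \<le> L y"
  thus "L' x = 0" using DERIV_local_min[OF d1[OF x], of e] by (simp add: abs_minus_commute)
qed

lemma ext_big: assumes x: "x \<in> dom_k \<kappa>" and e: "local_extremum_at L x" shows "sin_k \<kappa> x > m"
  using ext_crit[OF x e] L'pos[OF x] by force

lemma ex_r: assumes x: "x \<in> dom_k \<kappa>" "sin_k \<kappa> x > m"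
  shows "\<exists>r. 0 < r \<and> r < x \<and> sin_k \<kappa> r = m \<and> arcsin_k \<kappa> m = r"
proof -
  have "\<exists>r. 0 \<le> r \<and> r \<le> x \<and> sin_k \<kappa> r = m"
  proof -
    have c: "\<And>t. isCont (sin_k \<kappa>) t" using sk_deriv DERIV_isCont by blast
    show ?thesis using x m_pos c by (intro IVT) (auto simp: sk0 dom_iff)
  qed
  then obtain r where r: "0 \<le> r" "r \<le> x" "sin_k \<kappa> r = m" by blast
  have r0: "r \<noteq> 0" using r m_pos by (auto simp: sk0)
  have rx: "r \<noteq> x" using r x by auto
  define S where "S = {\<rho>. 0 \<le> \<rho> \<and> ereal \<rho> < R_k \<kappa>}"
  have inj: "inj_on (sin_k \<kappa>) S"
  proof (rule inj_onI)
    fix u v assume uv: "u \<in> S" "v \<in> S" "sin_k \<kappa> u = sin_k \<kappa> v"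
    show "u = v"
    proof (cases u v rule: linorder_cases)
      case less thus ?thesis using sk_mono[of u v \<kappa>] uv by (auto simp: S_def cdom_iff)
    next
      case greater thus ?thesis using sk_mono[of v u \<kappa>] uv by (auto simp: S_def cdom_iff)
    qed
  qed
  have rS: "r \<in> S" using r x by (auto simp: S_def cdom_iff dom_iff)
  have "arcsin_k \<kappa> m = r" unfolding arcsin_k_def S_def[symmetric]
    by (rule inv_into_f_eq[OF inj rS r(3)])
  thus ?thesis using r r0 rx by auto
qed

definition "P x = (sin_k \<kappa> x)\<^sup>2 - m\<^sup>2"
definition "G x = P x * (L x)\<^sup>2 + (g x)\<^sup>2"
definition "F x = (L x)\<^sup>2 + (g x)\<^sup>2 / P x"

lemma dG: assumes x: "x \<in> dom_k \<kappa>"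
  shows "(G has_real_derivative (2 * sin_k \<kappa> x * cos_k \<kappa> x * (L x)\<^sup>2)) (at x)"
proof -
  have s: "sin_k \<kappa> x \<noteq> 0" using sk_pos[OF x] by simp
  show ?thesis
    unfolding G_def[abs_def] P_def
    by (rule derivative_eq_intros sk_deriv d1[OF x] g_deriv[OF x] refl)+
       (use s in \<open>simp add: g_def field_simps power2_eq_square\<close>)
qed

lemma dP: "(P has_real_derivative (2 * sin_k \<kappa> x * cos_k \<kappa> x)) (at x)"
  unfolding P_def[abs_def] by (rule derivative_eq_intros sk_deriv refl)+ simp

lemma dF: assumes x: "x \<in> dom_k \<kappa>" and p: "P x \<noteq> 0"
  shows "(F has_real_derivative (- 2 * sin_k \<kappa> x * cos_k \<kappa> x * (g x)\<^sup>2 / (P x)\<^sup>2)) (at x)"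
proof -
  have s: "sin_k \<kappa> x \<noteq> 0" using sk_pos[OF x] by simp
  have gd: "(g has_real_derivative (- P x * L x / sin_k \<kappa> x)) (at x)"
    using g_deriv[OF x] by (simp add: P_def)
  show ?thesis
    unfolding F_def[abs_def]
    by (rule derivative_eq_intros dP d1[OF x] gd refl p)+
       (use s p in \<open>simp add: g_def field_simps power2_eq_square\<close>)
qed

lemma part2: assumes x: "x \<in> dom_k \<kappa>" and e: "local_extremum_at L x" shows "arcsin_k \<kappa> m \<le> x"
  using ex_r[OF x ext_big[OF x e]] by auto

lemma part1: assumes r1: "\<rho>1 \<in> dom_k \<kappa>" and r2: "\<rho>2 \<in> dom_k \<kappa>" and lt: "\<rho>1 < \<rho>2"
  and e1: "local_extremum_at L \<rho>1" and e2: "local_extremum_at L \<rho>2"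
  shows "\<bar>L \<rho>2\<bar> < \<bar>L \<rho>1\<bar>"
proof -
  have sm: "sin_k \<kappa> \<rho>1 > m" using ext_big[OF r1 e1] .
  obtain r where r: "0 < r" "r < \<rho>1" "sin_k \<kappa> r = m" using ex_r[OF r1 sm] by blast
  have rd: "r \<in> dom_k \<kappa>" using dom_down[OF r1, of r] r by auto
  have Lr: "L' r > 0" using L'pos[OF rd] r by simp
  have Gr: "G r > 0" using Lr r m_pos by (simp add: G_def P_def g_def)
  have Ginc: "G r \<le> G y" if "y \<in> dom_k \<kappa>" "r \<le> y" for y
  proof (rule DERIV_nonneg_imp_nondecreasing[OF that(2)])
    fix t assume t: "r \<le> t" "t \<le> y"
    have td: "t \<in> dom_k \<kappa>" using dom_down[OF that(1), of t] t r by auto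
    have "sin_k \<kappa> t > 0" using sk_pos[OF td] .
    moreover have "cos_k \<kappa> t > 0" using ck_pos[of t \<kappa>] td by (auto simp: dom_iff)
    ultimately have "2 * sin_k \<kappa> t * cos_k \<kappa> t * (L t)\<^sup>2 \<ge> 0" by simp
    thus "\<exists>y. (G has_real_derivative y) (at t) \<and> 0 \<le> y" using dG[OF td] by blast
  qed
  have Id: "t \<in> dom_k \<kappa>" if "\<rho>1 \<le> t" "t \<le> \<rho>2" for t
    using dom_down[OF r2, of t] that r1 by (auto simp: dom_iff)
  have Ip: "P t > 0" if "\<rho>1 \<le> t" "t \<le> \<rho>2" for t
  proof -
    have "sin_k \<kappa> t \<ge> sin_k \<kappa> \<rho>1" using s_le[OF Id[OF that], of \<rho>1] that r1
      by (cases "t = \<rho>1") (auto simp: dom_iff)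
    hence "sin_k \<kappa> t > m" using sm by simp
    hence "(sin_k \<kappa> t)\<^sup>2 > m\<^sup>2" using m_pos by (simp add: power_strict_mono)
    thus ?thesis by (simp add: P_def)
  qed
  have dFn: "\<exists>y. (F has_real_derivative y) (at t) \<and> y \<le> 0" if "\<rho>1 \<le> t" "t \<le> \<rho>2" for t
  proof -
    have td: "t \<in> dom_k \<kappa>" using Id[OF that] .
    have "sin_k \<kappa> t > 0" using sk_pos[OF td] .
    moreover have "cos_k \<kappa> t > 0" using ck_pos[of t \<kappa>] td by (auto simp: dom_iff)
    ultimately have "2 * sin_k \<kappa> t * cos_k \<kappa> t * (g t)\<^sup>2 / (P t)\<^sup>2 \<ge> 0" by simp
    hence "- 2 * sin_k \<kappa> t * cos_k \<kappa> t * (g t)\<^sup>2 / (P t)\<^sup>2 \<le> 0" by simp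
    thus ?thesis using dF[OF td] Ip[OF that] by fastforce
  qed
  have Fdec: "F b \<le> F a" if "\<rho>1 \<le> a" "a \<le> b" "b \<le> \<rho>2" for a b
    by (rule DERIV_nonpos_imp_nonincreasing[OF that(2)]) (use dFn that in auto)
  have g1: "g \<rho>1 = 0" using ext_crit[OF r1 e1] by (simp add: g_def)
  have g2: "g \<rho>2 = 0" using ext_crit[OF r2 e2] by (simp add: g_def)
  have "F \<rho>2 < F \<rho>1"
  proof (rule ccontr)
    assume "\<not> F \<rho>2 < F \<rho>1"
    hence Fc: "F t = F \<rho>1" if "\<rho>1 \<le> t" "t \<le> \<rho>2" for t
      using Fdec[of \<rho>1 t] Fdec[of t \<rho>2] that by fastforce
    have L'0: "L' t = 0" if "\<rho>1 < t" "t < \<rho>2" for t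
    proof -
      have td: "t \<in> dom_k \<kappa>" using Id that by auto
      have Pt: "P t \<noteq> 0" using Ip[of t] that by simp
      have dp: "min (t - \<rho>1) (\<rho>2 - t) > 0" using that by simp
      have "\<forall>y'. \<bar>t - y'\<bar> < min (t - \<rho>1) (\<rho>2 - t) \<longrightarrow> F y' \<le> F t"
      proof (intro allI impI)
        fix y' assume "\<bar>t - y'\<bar> < min (t - \<rho>1) (\<rho>2 - t)"
        hence "\<rho>1 \<le> y'" "y' \<le> \<rho>2" by (auto simp: abs_less_iff)
        thus "F y' \<le> F t" using Fc[of y'] Fc[of t] that by simp
      qed
      from DERIV_local_max[OF dF[OF td Pt] dp this]
      have "- 2 * sin_k \<kappa> t * cos_k \<kappa> t * (g t)\<^sup>2 / (P t)\<^sup>2 = 0" .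
      moreover have "sin_k \<kappa> t > 0" using sk_pos[OF td] .
      moreover have "cos_k \<kappa> t > 0" using ck_pos[of t \<kappa>] td by (auto simp: dom_iff)
      moreover have "P t > 0" using Ip that by simp
      ultimately have "g t = 0" by simp
      thus ?thesis using \<open>sin_k \<kappa> t > 0\<close> by (simp add: g_def)
    qed
    define y where "y = (\<rho>1 + \<rho>2) / 2"
    have y: "\<rho>1 < y" "y < \<rho>2" using lt by (auto simp: y_def)
    have yd: "y \<in> dom_k \<kappa>" using Id y by auto
    have dp: "min (y - \<rho>1) (\<rho>2 - y) > 0" using y by simp
    have "\<forall>y'. \<bar>y - y'\<bar> < min (y - \<rho>1) (\<rho>2 - y) \<longrightarrow> L' y' \<le> L' y"
    proof (intro allI impI)
      fix y' assume "\<bar>y - y'\<bar> < min (y - \<rho>1) (\<rho>2 - y)"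
      hence "\<rho>1 < y'" "y' < \<rho>2" by (auto simp: abs_less_iff)
      thus "L' y' \<le> L' y" using L'0[of y'] L'0[OF y] by simp
    qed
    from DERIV_local_max[OF d2[OF yd] dp this] have "L'' y = 0" .
    hence "P y * L y = 0" using ode[OF yd] L'0[OF y] by (simp add: P_def)
    hence "L y = 0" using Ip[of y] y by simp
    hence "G y = 0" using L'0[OF y] by (simp add: G_def g_def)
    thus False using Ginc[OF yd] Gr y r by simp
  qed
  hence "(L \<rho>2)\<^sup>2 < (L \<rho>1)\<^sup>2" using g1 g2 by (simp add: F_def)
  hence "\<bar>L \<rho>2\<bar>\<^sup>2 < \<bar>L \<rho>1\<bar>\<^sup>2" by simp
  thus ?thesis using power_less_imp_less_base[of "\<bar>L \<rho>2\<bar>" 2 "\<bar>L \<rho>1\<bar>"] by simp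
qed

end

theorem mainTheorem3:
  fixes \<kappa> m :: real and L L' L'' :: "real \<Rightarrow> real"
  assumes m_pos: "m > 0"
    and regular: "continuous_on {\<rho>. 0 \<le> \<rho> \<and> ereal \<rho> < R_k \<kappa>} L"
    and d1: "\<And>\<rho>. \<rho> \<in> dom_k \<kappa> \<Longrightarrow> (L has_real_derivative L' \<rho>) (at \<rho>)"
    and d2: "\<And>\<rho>. \<rho> \<in> dom_k \<kappa> \<Longrightarrow> (L' has_real_derivative L'' \<rho>) (at \<rho>)"
    and ode: "\<And>\<rho>. \<rho> \<in> dom_k \<kappa> \<Longrightarrow>
       (sin_k \<kappa> \<rho>)\<^sup>2 * L'' \<rho> + sin_k \<kappa> \<rho> * cos_k \<kappa> \<rho> * L' \<rho>
         + ((sin_k \<kappa> \<rho>)\<^sup>2 - m\<^sup>2) * L \<rho> = 0"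
    and pos: "\<exists>\<epsilon>>0. \<forall>\<rho>. 0 < \<rho> \<and> \<rho> < \<epsilon> \<longrightarrow> L \<rho> > 0"
  shows "(\<forall>\<rho>1 \<rho>2. \<rho>1 \<in> dom_k \<kappa> \<and> \<rho>2 \<in> dom_k \<kappa> \<and> \<rho>1 < \<rho>2
            \<and> local_extremum_at L \<rho>1 \<and> local_extremum_at L \<rho>2
            \<longrightarrow> \<bar>L \<rho>2\<bar> < \<bar>L \<rho>1\<bar>)
       \<and> (\<forall>\<rho>1. \<rho>1 \<in> dom_k \<kappa> \<and> local_extremum_at L \<rho>1
            \<and> (\<forall>\<sigma>. 0 < \<sigma> \<and> \<sigma> < \<rho>1 \<longrightarrow> \<not> local_extremum_at L \<sigma>)
            \<longrightarrow> arcsin_k \<kappa> m \<le> \<rho>1)"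
proof -
  interpret lset \<kappa> m L L' L''
    by (rule lset.intro[OF m_pos regular d1 d2 ode pos])
  show ?thesis using part1 part2 by blast
qed

end
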